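(* Let $Q$ be an automorphic loop and let $J:Q\to Q$, $x\mapsto x^{-1}$, be the inversion map. Then $J$ lies in $N_{\mathrm{Sym}(Q)}(\mathrm{Mlt}(Q))\cap C_{\mathrm{Sym}(Q)}(\mathrm{Inn}(Q))$, i.e. $J$ normalizes $\mathrm{Mlt}(Q)$ and centralizes $\mathrm{Inn}(Q)$ in the symmetric group on $Q$.
   Context: A loop is a set with a binary operation in which left and right division are uniquely solvable and which has a neutral element $1$. $R_a:x\mapsto xa$, $L_a:x\mapsto ax$; $\mathrm{Mlt}(Q)=\langle R_x,L_x\mid x\in Q\rangle$; $\mathrm{Inn}(Q)$ is the stabilizer of $1$ in $\mathrm{Mlt}(Q)$. $Q$ is automorphic if $\mathrm{Inn}(Q)\le\mathrm{Aut}(Q)$. Automorphic loops are power-associative, so every element $x$ has a two-sided inverse $x^{-1}$. *)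

theory Defs
  imports Main
begin

definition loop :: "('a \<Rightarrow> 'a \<Rightarrow> 'a) \<Rightarrow> 'a \<Rightarrow> bool" where
  "loop mult e \<longleftrightarrow>
     (\<forall>a b. \<exists>!x. mult a x = b) \<and> (\<forall>a b. \<exists>!y. mult y a = b) \<and>
     (\<forall>x. mult e x = x \<and> mult x e = x)"

definition R_map :: "('a \<Rightarrow> 'a \<Rightarrow> 'a) \<Rightarrow> 'a \<Rightarrow> 'a \<Rightarrow> 'a" where
  "R_map mult a = (\<lambda>x. mult x a)"

definition L_map :: "('a \<Rightarrow> 'a \<Rightarrow> 'a) \<Rightarrow> 'a \<Rightarrow> 'a \<Rightarrow> 'a" where
  "L_map mult a = (\<lambda>x. mult a x)"

inductive_set Mlt :: "('a \<Rightarrow> 'a \<Rightarrow> 'a) \<Rightarrow> ('a \<Rightarrow> 'a) set" for mult where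
  Mlt_R: "R_map mult a \<in> Mlt mult"
| Mlt_L: "L_map mult a \<in> Mlt mult"
| Mlt_id: "id \<in> Mlt mult"
| Mlt_comp: "f \<in> Mlt mult \<Longrightarrow> g \<in> Mlt mult \<Longrightarrow> f \<circ> g \<in> Mlt mult"
| Mlt_inv: "f \<in> Mlt mult \<Longrightarrow> inv f \<in> Mlt mult"

definition Inn :: "('a \<Rightarrow> 'a \<Rightarrow> 'a) \<Rightarrow> 'a \<Rightarrow> ('a \<Rightarrow> 'a) set" where
  "Inn mult e = {f \<in> Mlt mult. f e = e}"

definition Aut :: "('a \<Rightarrow> 'a \<Rightarrow> 'a) \<Rightarrow> ('a \<Rightarrow> 'a) set" where
  "Aut mult = {f. bij f \<and> (\<forall>x y. f (mult x y) = mult (f x) (f y))}"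

definition automorphic_loop :: "('a \<Rightarrow> 'a \<Rightarrow> 'a) \<Rightarrow> 'a \<Rightarrow> bool" where
  "automorphic_loop mult e \<longleftrightarrow> loop mult e \<and> Inn mult e \<subseteq> Aut mult"

text \<open>Two-sided inverse x^-1 (exists in automorphic loops, which are power-associative).\<close>
definition loop_inv :: "('a \<Rightarrow> 'a \<Rightarrow> 'a) \<Rightarrow> 'a \<Rightarrow> 'a \<Rightarrow> 'a" where
  "loop_inv mult e x = (THE y. mult x y = e \<and> mult y x = e)"

end

theory Submission
  imports Defs
begin

locale aloop =
  fixes m :: "'a \<Rightarrow> 'a \<Rightarrow> 'a" and ld rd :: "'a \<Rightarrow> 'a \<Rightarrow> 'a" and e :: 'a
  assumes a1: "ld x (m x y) = y"
  and a2: "m x (ld x y) = y"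
  and a3: "rd (m y x) x = y"
  and a4: "m (rd y x) x = y"
  and a5: "m e x = x"
  and a6: "m x e = x"
  and at: "rd (m x (m u v)) x = m (rd (m x u) x) (rd (m x v) x)"
  and ar: "rd (m (m (m u v) x) y) (m x y) = m (rd (m (m u x) y) (m x y)) (rd (m (m v x) y) (m x y))"
  and al: "ld (m y x) (m y (m x (m u v))) = m (ld (m y x) (m y (m x u))) (ld (m y x) (m y (m x v)))"
begin

lemma f20: "ld x e = rd e x"
proof -
  have "rd (m x (m x (ld x e))) x = m (rd (m x x) x) (rd (m x (ld x e)) x)" by (rule at)
  hence "rd (m x e) x = m x (rd e x)" by (simp add: a2 a3)
  hence "e = m x (rd e x)" using a6 by (metis a3 a5)
  thus ?thesis by (metis a1)
qed

abbreviation i where "i x \<equiv> ld x e"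

lemma f32: "ld e x = x" by (metis a1 a5)
lemma f33: "rd x e = x" by (metis a3 a6)
lemma f34: "e = rd x x" by (metis a3 a5)
lemma f39: "e = m (ld x e) x" by (metis a4 f20)
lemma f36: "rd y (ld x y) = x" by (metis a3 a2)
lemma f42: "ld (rd x y) x = y" by (metis a1 a4)
lemma f224: "ld (ld x e) e = x" by (metis f36 f20)
lemma f57: "rd (m x (m y x)) x = m (rd (m x y) x) x" by (metis at a3)
lemma f72: "m x y = rd (m x (m y x)) x" by (metis f57 a4)
lemma f283: "m x (m y x) = m (m x y) x" by (metis a4 f72)
lemma f274: "m y (rd x y) = rd (m y x) y" by (metis f72 a4)
lemma f58: "rd (m x0 x1) x0 = rd (rd (m x0 (m x1 x2)) x0) (rd (m x0 x2) x0)" by (metis a3 at)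
lemma f323: "m x0 (rd x1 x0) = rd (m x0 (rd (m x1 x2) x0)) (m x0 (rd x2 x0))" by (metis f58 f274)
lemma f750: "m x22 (rd (ld x21 e) x22) = rd e (m x22 (rd x21 x22))" by (metis f323 f39 f20 a2)
lemma f12058: "m x11 (rd (ld (m x10 x11) e) x11) = ld (m x11 x10) e" by (metis f750 a3 f20)
lemma f445: "ld (m x13 (rd x14 x13)) (m x13 x14) = x13" by (metis f42 f274)
lemma f23602: "ld (ld (m a b) e) (m a (ld (m b a) e)) = a" by (metis f445 f12058)
lemma f73561: "ld (m a b) e = rd (m a (ld (m b a) e)) a" by (metis f36 f23602)
lemma f97: "ld x4 (m x3 (m (ld x3 x4) (m x5 x6))) = m (ld x4 (m x3 (m (ld x3 x4) x5))) (ld x4 (m x3 (m (ld x3 x4) x6)))"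
  by (metis al a2)
lemma f1410: "m x (m (i x) (m y x)) = m x (m (m (i x) y) x)"
proof -
  have "ld e (m x (m (ld x e) (m y x))) = m (ld e (m x (m (ld x e) y))) (ld e (m x (m (ld x e) x)))" by (rule f97)
  thus ?thesis by (metis f32 f39 a6 f283)
qed
lemma f34718: "m (m (i x) y) x = m (i x) (m y x)" by (metis f1410 a1)
lemma f35023: "m x (m y (i x)) = m (m x y) (i x)" by (metis f34718 f224)
lemma f53: "rd (m x2 (m x4 (ld x2 x3))) x2 = m (rd (m x2 x4) x2) (rd x3 x2)" by (metis at a2)
lemma f317: "m (m x2 (rd x4 x2)) (rd x3 x2) = m x2 (rd (m x4 (ld x2 x3)) x2)" by (metis f53 f274)
lemma f604: "m x0 (rd (m x1 (i x0)) x0) = m (m x0 (rd x1 x0)) (i x0)" by (metis f317 f20)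
lemma f42206: "rd (m x (i y)) y = m (rd x y) (i y)" by (metis f604 f35023 a1)
lemma f61418: "m x (i y) = m (m (rd x y) (i y)) y" by (metis a4 f42206)
lemma f161: "rd (m (m (m x5 x3) (ld x3 x4)) x6) (m (ld x3 x4) x6) = m (rd (m (m x5 (ld x3 x4)) x6) (m (ld x3 x4) x6)) (rd (m x4 x6) (m (ld x3 x4) x6))"
  by (metis ar a2)
lemma f4567: "m (m (m x y) (i y)) y = m (m (m x (i y)) y) y"
proof -
  have "rd (m (m (m x y) (ld y e)) y) (m (ld y e) y) = m (rd (m (m x (ld y e)) y) (m (ld y e) y)) (rd (m e y) (m (ld y e) y))" by (rule f161)
  thus ?thesis by (metis f39 f33 a5)
qed
lemma f41030: "m (m x (i y)) y = m (m x y) (i y)" by (metis a3 f4567)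
lemma f57419: "m x (i y) = rd (m (m x y) (i y)) y" by (metis a3 f41030)
lemma f179: "rd (m (m x5 x6) x7) (m x6 x7) = rd (rd (m (m (m x5 x8) x6) x7) (m x6 x7)) (rd (m (m x8 x6) x7) (m x6 x7))"
  by (metis a3 ar)
lemma f3467: "rd (m (m (i a) b) c) (m b c) = i (rd (m (m a b) c) (m b c))"
proof -
  have "rd (m (m (ld a e) b) c) (m b c) = rd (rd (m (m (m (ld a e) a) b) c) (m b c)) (rd (m (m a b) c) (m b c))" by (rule f179)
  thus ?thesis by (metis f39 a5 f34 f20)
qed
lemma f54238: "i (m (m a b) (i b)) = m (m (i a) b) (i b)"
proof -
  have "rd (m (m (ld a e) (ld b e)) b) (m (ld b e) b) = ld (rd (m (m a (ld b e)) b) (m (ld b e) b)) e" by (rule f3467)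
  thus ?thesis by (metis f39 f33 f41030)
qed
lemma f163: "rd (m (m (m x15 (rd x13 x14)) x14) x16) (m x14 x16) = m (rd (m (m x15 x14) x16) (m x14 x16)) (rd (m x13 x16) (m x14 x16))"
  by (metis ar a4)
lemma f34737: "m (rd c (m a c)) (rd (m b c) (m a c)) = rd (m (m (i a) b) c) (m a c)"
proof -
  have "rd (m (m (m (ld a e) (rd b a)) a) c) (m a c) = m (rd (m (m (ld a e) a) c) (m a c)) (rd (m b c) (m a c))" by (rule f163)
  thus ?thesis by (metis f39 a5 f34718 a4)
qed
lemma f56968: "m (rd b a) (rd (m c b) a) = rd (m (m (i (rd a b)) c) b) a" by (metis f34737 a4)
lemma f112425: "i (m a (i b)) = m (m (i (rd a b)) b) (i b)" by (metis f54238 a4)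
lemma f113508: "m (rd b a) (i a) = rd (i (m a (i b))) a"
proof -
  have "m (rd b a) (rd (m (ld b e) b) a) = rd (m (m (ld (rd a b) e) (ld b e)) b) a" by (rule f56968)
  thus ?thesis by (metis f41030 f112425 f39 f20)
qed
lemma f164723: "m b (i a) = i (m a (i b))" by (metis f61418 a4 f113508)
lemma f164739: "m (m (i b) a) (i a) = m a (i (m b a))" by (metis f54238 f164723)
lemma aaip: "i (m b a) = m (i a) (i b)" by (metis f73561 f57419 f164739)

end

lemma loop_ld_rd:
  assumes L: "loop mult e"
  and ld_def: "ld = (\<lambda>a b. THE x. mult a x = b)"
  and rd_def: "rd = (\<lambda>b a. THE y. mult y a = b)"
  shows "ld x (mult x y) = y" "mult x (ld x y) = y" "rd (mult y x) x = y" "mult (rd y x) x = y"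
    "mult e x = x" "mult x e = x"
proof -
  have u1: "\<And>a b. \<exists>!x. mult a x = b" and u2: "\<And>a b. \<exists>!y. mult y a = b"
    and ne: "\<And>x. mult e x = x \<and> mult x e = x" using L unfolding loop_def by blast+
  show "ld x (mult x y) = y" unfolding ld_def by (rule the1_equality[OF u1]) simp
  show "mult x (ld x y) = y" unfolding ld_def by (rule theI'[OF u1])
  show "rd (mult y x) x = y" unfolding rd_def by (rule the1_equality[OF u2]) simp
  show "mult (rd y x) x = y" unfolding rd_def by (rule theI'[OF u2])
  show "mult e x = x" "mult x e = x" using ne by auto
qed

lemma Mlt_bij: "f \<in> Mlt mult \<Longrightarrow> loop mult e \<Longrightarrow> bij f"
proof (induction rule: Mlt.induct)
  case (Mlt_R a)
  note B = loop_ld_rd[OF Mlt_R refl refl]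
  have "inj (\<lambda>x. mult x a)" by (rule injI) (metis B(3))
  moreover have "surj (\<lambda>x. mult x a)" by (rule surjI) (rule B(4))
  ultimately show ?case unfolding R_map_def by (rule bijI)
next
  case (Mlt_L a)
  note B = loop_ld_rd[OF Mlt_L refl refl]
  have "inj (\<lambda>x. mult a x)" by (rule injI) (metis B(1))
  moreover have "surj (\<lambda>x. mult a x)" by (rule surjI) (rule B(2))
  ultimately show ?case unfolding L_map_def by (rule bijI)
next
  case Mlt_id then show ?case by (simp add: bij_betw_def inj_on_def)
next
  case (Mlt_comp f g) then show ?case using bij_comp by blast
next
  case (Mlt_inv f) then show ?case using bij_imp_bij_inv by blast
qed

theorem corollary2p2:
  fixes mult :: "'a \<Rightarrow> 'a \<Rightarrow> 'a" and e :: 'a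
  assumes "automorphic_loop mult e"
  defines "J \<equiv> loop_inv mult e"
  shows "bij J
    \<and> (\<lambda>f. J \<circ> f \<circ> inv J) ` Mlt mult = Mlt mult
    \<and> (\<forall>f \<in> Inn mult e. J \<circ> f = f \<circ> J)"
proof -
  have L: "loop mult e" and IA: "Inn mult e \<subseteq> Aut mult"
    using assms(1) unfolding automorphic_loop_def by auto
  define ld where "ld \<equiv> \<lambda>a b. THE x. mult a x = (b::'a)"
  define rd where "rd \<equiv> \<lambda>b a. THE y. mult y a = (b::'a)"
  note B = loop_ld_rd[OF L meta_eq_to_obj_eq[OF ld_def] meta_eq_to_obj_eq[OF rd_def]]
  have invR: "inv (R_map mult a) = (\<lambda>y. rd y a)" for a
    by (rule inv_equality) (simp_all add: R_map_def B)
  have invL: "inv (L_map mult a) = (\<lambda>y. ld a y)" for a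
    by (rule inv_equality) (simp_all add: L_map_def B)
  have aut: "f (mult u v) = mult (f u) (f v)" if "f \<in> Mlt mult" "f e = e" for f u v
    using IA that unfolding Inn_def Aut_def by blast
  have at: "rd (mult x (mult u v)) x = mult (rd (mult x u) x) (rd (mult x v) x)" for x u v
  proof -
    let ?f = "inv (R_map mult x) \<circ> L_map mult x"
    have "?f \<in> Mlt mult" by (intro Mlt.intros)
    moreover have "?f e = e" using B(3)[of e x] by (simp add: invR L_map_def B)
    ultimately show ?thesis using aut[of ?f u v] by (simp add: invR L_map_def)
  qed
  have ar: "rd (mult (mult (mult u v) x) y) (mult x y) = mult (rd (mult (mult u x) y) (mult x y)) (rd (mult (mult v x) y) (mult x y))" for x y u v
  proof -
    let ?f = "inv (R_map mult (mult x y)) \<circ> R_map mult y \<circ> R_map mult x"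
    have "?f \<in> Mlt mult" by (intro Mlt.intros)
    moreover have "?f e = e" using B(3)[of e "mult x y"] by (simp add: invR) (simp add: R_map_def B)
    ultimately show ?thesis using aut[of ?f "u" v] by (simp add: invR) (simp add: R_map_def)
  qed
  have al: "ld (mult y x) (mult y (mult x (mult u v))) = mult (ld (mult y x) (mult y (mult x u))) (ld (mult y x) (mult y (mult x v)))" for x y u v
  proof -
    let ?f = "inv (L_map mult (mult y x)) \<circ> L_map mult y \<circ> L_map mult x"
    have "?f \<in> Mlt mult" by (intro Mlt.intros)
    moreover have "?f e = e" using B(1)[of "mult y x" e] by (simp add: invL) (simp add: L_map_def B)
    ultimately show ?thesis using aut[of ?f "u" v] by (simp add: invL) (simp add: L_map_def)
  qed
  interpret aloop mult ld rd e
    by unfold_locales (simp_all add: B at ar al)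
  have Jx: "J x = ld x e" for x
    unfolding J_def loop_inv_def
  proof (rule the_equality)
    show "mult x (ld x e) = e \<and> mult (ld x e) x = e" using f39 a2 by metis
    show "\<And>y. mult x y = e \<and> mult y x = e \<Longrightarrow> y = ld x e" by (metis a1)
  qed
  have JJ: "J \<circ> J = id" by (rule ext) (simp add: Jx f224)
  have bJ: "bij J" using JJ by (metis o_bij)
  have iJ: "inv J = J" using JJ by (metis inv_unique_comp)
  have cl: "J \<circ> f \<circ> J \<in> Mlt mult \<and> bij f" if "f \<in> Mlt mult" for f
    using that
  proof (induction rule: Mlt.induct)
    case (Mlt_R a)
    have "J \<circ> R_map mult a \<circ> J = L_map mult (ld a e)"
      by (rule ext) (simp add: Jx R_map_def L_map_def aaip f224)
    then show ?case using Mlt.intros Mlt_bij[OF _ L] by metis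
  next
    case (Mlt_L a)
    have "J \<circ> L_map mult a \<circ> J = R_map mult (ld a e)"
      by (rule ext) (simp add: Jx R_map_def L_map_def aaip f224)
    then show ?case using Mlt.intros Mlt_bij[OF _ L] by metis
  next
    case Mlt_id then show ?case using JJ by (metis Mlt.Mlt_id bij_id comp_id)
  next
    case (Mlt_comp f g)
    have "J \<circ> (f \<circ> g) \<circ> J = (J \<circ> f \<circ> J) \<circ> (J \<circ> g \<circ> J)"
      using JJ by (simp add: fun_eq_iff)
    then show ?case using Mlt_comp Mlt.intros bij_comp by metis
  next
    case (Mlt_inv f)
    have "inv (J \<circ> f \<circ> J) = inv J \<circ> inv f \<circ> inv J"
      using Mlt_inv bJ by (simp add: o_inv_distrib bij_comp comp_assoc)
    then show ?case using Mlt_inv iJ Mlt.intros bij_imp_bij_inv by metis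
  qed
  have img: "(\<lambda>f. J \<circ> f \<circ> inv J) ` Mlt mult = Mlt mult"
  proof
    show "(\<lambda>f. J \<circ> f \<circ> inv J) ` Mlt mult \<subseteq> Mlt mult" using cl iJ by auto
    show "Mlt mult \<subseteq> (\<lambda>f. J \<circ> f \<circ> inv J) ` Mlt mult"
    proof
      fix f assume f: "f \<in> Mlt mult"
      have "f = J \<circ> (J \<circ> f \<circ> J) \<circ> J" using JJ by (simp add: fun_eq_iff pointfree_idE)
      then show "f \<in> (\<lambda>f. J \<circ> f \<circ> inv J) ` Mlt mult" using cl[OF f] iJ by (metis image_eqI)
    qed
  qed
  have cen: "\<forall>f \<in> Inn mult e. J \<circ> f = f \<circ> J"
  proof
    fix f assume f: "f \<in> Inn mult e"
    then have fe: "f e = e" and fm: "f \<in> Mlt mult" unfolding Inn_def by auto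
    show "J \<circ> f = f \<circ> J"
    proof (rule ext)
      fix x
      have "mult (f x) (f (ld x e)) = e" using aut[OF fm fe, of x "ld x e"] a2 fe by metis
      then show "(J \<circ> f) x = (f \<circ> J) x" by (simp add: Jx) (metis a1)
    qed
  qed
  show ?thesis using bJ img cen by blast
qed

end
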